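(* In the same situation, the coefficients $\varepsilon_i$ ($i\ge a+1$) satisfy $ord(\varepsilon_i)\ge i+\min_{2\le j\le a}\{ord(\delta_j)-j\}$.
   Context: Setting: $a\ge2$, $c_i(N)\in t^i\mathbb C[[t]]$, $\delta_i\in t^{i+1}\mathbb C[[t]]$, $c_i(N+1)=c_i(N)+\delta_i$ ($2\le i\le a$), and $\delta_i'$ ($2\le i\le a$), $\varepsilon_i$ ($i>a$) are the unique elements of $\mathbb C[[t]]$ such that $s(N+1)=s-\frac1a\sum_{i=2}^a\delta_i's^{1-i}+\sum_{i>a}\varepsilon_is^{1-i}$ satisfies $s(N+1)^a+\sum_{k=2}^ac_k(N+1)s(N+1)^{a-k}=s^a+\sum_{k=2}^ac_k(N)s^{a-k}$. For $\delta\in\mathbb C[[t]]$, $ord(\delta)$ is the largest $k$ with $t^k\mid\delta$. *)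

theory Defs
  imports "HOL-Computational_Algebra.Formal_Laurent_Series" "HOL-Library.Extended_Nat"
begin

text \<open>Ambient ring: formal Laurent series in s^{-1} (the variable fls_X plays the role of
  s^{-1}, so s = fls_X_inv) with coefficients in C[[t]] = complex fps.\<close>

type_synonym cfps = "complex fps"

definition sv :: "cfps fls" where "sv = fls_X_inv"

definition spow1m :: "nat \<Rightarrow> cfps fls" where "spow1m i = fls_X ^ (i - 1)"

text \<open>The infinite tail  sum_{i>a} eps_i s^(1-i).\<close>
definition tail_sum :: "nat \<Rightarrow> (nat \<Rightarrow> cfps) \<Rightarrow> cfps fls" where
  "tail_sum a eps = fls_X_inv * fps_to_fls (Abs_fps (\<lambda>i. if a < i then eps i else 0))"

definition s_next :: "nat \<Rightarrow> (nat \<Rightarrow> cfps) \<Rightarrow> (nat \<Rightarrow> cfps) \<Rightarrow> cfps fls" where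
  "s_next a d' eps = sv
     - fls_const (fps_const (1 / of_nat a)) * (\<Sum>i=2..a. fls_const (d' i) * spow1m i)
     + tail_sum a eps"

definition monic_expr :: "nat \<Rightarrow> (nat \<Rightarrow> cfps) \<Rightarrow> cfps fls \<Rightarrow> cfps fls" where
  "monic_expr a c x = x ^ a + (\<Sum>k=2..a. fls_const (c k) * x ^ (a - k))"

definition ord :: "cfps \<Rightarrow> enat" where
  "ord d = (if d = 0 then \<infinity> else enat (subdegree d))"

end

theory Submission imports Defs begin
unbundle fps_syntax

definition W :: "cfps fls \<Rightarrow> int \<Rightarrow> bool" where
  "W F r \<longleftrightarrow> (\<forall>n. fps_X ^ nat (r + n) dvd F $$ n)"

definition L :: "cfps fls \<Rightarrow> int \<Rightarrow> cfps \<Rightarrow> bool" where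
  "L F d c \<longleftrightarrow> (\<forall>i<d. F $$ i = 0) \<and> F $$ d = c"

lemma W_add: "W F r \<Longrightarrow> W G r \<Longrightarrow> W (F + G) r"
  by (simp add: W_def)
lemma W_diff: "W F r \<Longrightarrow> W G r \<Longrightarrow> W (F - G) r"
  by (simp add: W_def)
lemma W_uminus: "W F r \<Longrightarrow> W (- F) r"
  by (simp add: W_def)
lemma W_zero: "W 0 r" by (simp add: W_def)
lemma W_sum: "(\<And>x. x \<in> A \<Longrightarrow> W (f x) r) \<Longrightarrow> W (\<Sum>x\<in>A. f x) r"
  by (induction A rule: infinite_finite_induct) (auto simp: W_zero W_add)
lemma W_mono: "W F r \<Longrightarrow> q \<le> r \<Longrightarrow> W F q"
  unfolding W_def
  by (meson dvd_trans le_imp_power_dvd nat_mono add_right_mono)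
lemma W_const: "fps_X ^ nat r dvd c \<Longrightarrow> W (fls_const c) r"
  by (simp add: W_def)
lemma W_X_inv: "W fls_X_inv 1" by (simp add: W_def)
lemma W_mult: assumes "W F r" "W G q" shows "W (F * G) (r + q)"
  unfolding W_def
proof
  fix n
  have "(F * G) $$ n = (\<Sum>i=fls_subdegree F..n - fls_subdegree G. F $$ i * G $$ (n - i))"
    by (rule fls_times_nth(2))
  also have "fps_X ^ nat (r + q + n) dvd \<dots>"
  proof (rule dvd_sum)
    fix i
    have "fps_X ^ nat (r + i) dvd F $$ i" using assms(1) by (simp add: W_def)
    moreover have "fps_X ^ nat (q + (n - i)) dvd G $$ (n - i)" using assms(2) by (simp add: W_def)
    ultimately have "fps_X ^ nat (r + i) * fps_X ^ nat (q + (n - i)) dvd F $$ i * G $$ (n - i)"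
      by (rule mult_dvd_mono)
    moreover have "fps_X ^ nat (r + q + n) dvd (fps_X ^ nat (r + i) * fps_X ^ nat (q + (n - i)) :: cfps)"
      unfolding power_add[symmetric] by (rule le_imp_power_dvd) linarith
    ultimately show "fps_X ^ nat (r + q + n) dvd F $$ i * G $$ (n - i)"
      using dvd_trans by blast
  qed
  finally show "fps_X ^ nat (r + q + n) dvd (F * G) $$ n" .
qed
lemma W_one: "W 1 0"
  by (simp add: W_def)
lemma W_pow: "W F r \<Longrightarrow> W (F ^ k) (int k * r)"
proof (induction k)
  case 0 then show ?case by (simp add: W_one)
next
  case (Suc k)
  then have "W (F * F ^ k) (r + int k * r)" using W_mult by blast
  then show ?case by (simp add: algebra_simps)
qed

lemma times_nth_gen:
  fixes F G :: "cfps fls"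
  assumes "\<And>i. i < p \<Longrightarrow> F $$ i = 0" "\<And>i. i < q \<Longrightarrow> G $$ i = 0"
  shows "(F * G) $$ n = (\<Sum>i=p..n - q. F $$ i * G $$ (n - i))"
proof (cases "F = 0 \<or> G = 0")
  case True then show ?thesis by auto
next
  case False
  then have hp: "p \<le> fls_subdegree F" and hq: "q \<le> fls_subdegree G"
    using assms fls_subdegree_geI by blast+
  have "(F * G) $$ n = (\<Sum>i=fls_subdegree F..n - fls_subdegree G. F $$ i * G $$ (n - i))"
    by (rule fls_times_nth(2))
  also have "\<dots> = (\<Sum>i=p..n - q. F $$ i * G $$ (n - i))"
  proof (rule sum.mono_neutral_left)
    show "\<forall>i\<in>{p..n - q} - {fls_subdegree F..n - fls_subdegree G}. F $$ i * G $$ (n - i) = 0"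
    proof
      fix i assume "i \<in> {p..n - q} - {fls_subdegree F..n - fls_subdegree G}"
      then have "i < fls_subdegree F \<or> n - i < fls_subdegree G" by auto
      then show "F $$ i * G $$ (n - i) = 0" by auto
    qed
  qed (use hp hq in auto)
  finally show ?thesis .
qed

lemma L_mult: assumes "L F d c" "L G e c'" shows "L (F * G) (d + e) (c * c')"
proof -
  have z1: "\<And>i. i < d \<Longrightarrow> F $$ i = 0" and z2: "\<And>i. i < e \<Longrightarrow> G $$ i = 0"
    using assms by (auto simp: L_def)
  have "\<And>n. (F * G) $$ n = (\<Sum>i=d..n - e. F $$ i * G $$ (n - i))"
    by (rule times_nth_gen[OF z1 z2])
  then show ?thesis using assms by (auto simp: L_def)
qed
lemma L_add: "L F d c \<Longrightarrow> L G d c' \<Longrightarrow> L (F + G) d (c + c')"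
  by (simp add: L_def)
lemma L_zero: "L 0 d 0" by (simp add: L_def)
lemma L_sum: "(\<And>x. x \<in> A \<Longrightarrow> L (f x) d (g x)) \<Longrightarrow> L (\<Sum>x\<in>A. f x) d (\<Sum>x\<in>A. g x)"
  by (induction A rule: infinite_finite_induct) (auto simp: L_zero L_add)
lemma L_one: "L 1 0 1" by (simp add: L_def)
lemma L_pow: "L F d c \<Longrightarrow> L (F ^ k) (int k * d) (c ^ k)"
proof (induction k)
  case 0 then show ?case by (simp add: L_one)
next
  case (Suc k)
  then have "L (F * F ^ k) (d + int k * d) (c * c ^ k)" using L_mult by blast
  then show ?case by (simp add: algebra_simps)
qed
lemma L_lower: "L F d c \<Longrightarrow> d' < d \<Longrightarrow> L F d' 0"
  by (simp add: L_def)
lemma L_const: "L (fls_const c) 0 c" by (simp add: L_def)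

definition G :: "nat \<Rightarrow> cfps fls \<Rightarrow> cfps fls \<Rightarrow> cfps fls" where
  "G n y z = (\<Sum>i<n. z ^ (n - Suc i) * y ^ i)"
definition Q :: "nat \<Rightarrow> (nat \<Rightarrow> cfps) \<Rightarrow> cfps fls \<Rightarrow> cfps fls \<Rightarrow> cfps fls" where
  "Q a c y z = G a y z + (\<Sum>k=2..a. fls_const (c k) * G (a - k) y z)"

lemma monic_diff: "monic_expr a c y - monic_expr a c z = (y - z) * Q a c y z"
proof -
  have "monic_expr a c y - monic_expr a c z =
     (y ^ a - z ^ a) + (\<Sum>k=2..a. fls_const (c k) * (y ^ (a - k) - z ^ (a - k)))"
    unfolding monic_expr_def by (simp add: sum_subtractf[symmetric] algebra_simps)
  also have "\<dots> = (y - z) * G a y z + (\<Sum>k=2..a. fls_const (c k) * ((y - z) * G (a - k) y z))"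
    unfolding G_def power_diff_sumr2[of y _ z] by simp
  also have "\<dots> = (y - z) * Q a c y z"
    unfolding Q_def by (simp add: algebra_simps sum_distrib_left)
  finally show ?thesis .
qed

lemma W_G: assumes "W y 1" "W z 1" shows "W (G n y z) (int n - 1)"
  unfolding G_def
proof (rule W_sum)
  fix i assume "i \<in> {..<n}"
  then have e: "int (n - Suc i) * 1 + int i * 1 = int n - 1" by auto
  show "W (z ^ (n - Suc i) * y ^ i) (int n - 1)"
    using W_mult[OF W_pow[OF assms(2)] W_pow[OF assms(1)]] e by metis
qed

lemma L_G: assumes "L y (-1) 1" "L z (-1) 1" shows "L (G n y z) (1 - int n) (of_nat n)"
proof -
  have "L (G n y z) (1 - int n) (\<Sum>i<n. 1)"
    unfolding G_def
  proof (rule L_sum)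
    fix i assume "i \<in> {..<n}"
    then have e: "int (n - Suc i) * -1 + int i * -1 = 1 - int n" by auto
    show "L (z ^ (n - Suc i) * y ^ i) (1 - int n) 1"
      using L_mult[OF L_pow[OF assms(2)] L_pow[OF assms(1)]] e by (metis power_one mult_1)
  qed
  then show ?thesis by simp
qed

lemma W_Q: assumes "W y 1" "W z 1" "\<And>k. 2 \<le> k \<Longrightarrow> k \<le> a \<Longrightarrow> fps_X ^ k dvd c k"
  shows "W (Q a c y z) (int a - 1)"
  unfolding Q_def
proof (rule W_add[OF W_G[OF assms(1,2)]], rule W_sum)
  fix k assume k: "k \<in> {2..a}"
  have "W (fls_const (c k)) (int k)" using assms(3) k by (intro W_const) auto
  from W_mult[OF this W_G[OF assms(1,2), of "a - k"]] k
  show "W (fls_const (c k) * G (a - k) y z) (int a - 1)" by (simp add: of_nat_diff)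
qed

lemma L_Q: assumes "L y (-1) 1" "L z (-1) 1"
  shows "L (Q a c y z) (1 - int a) (of_nat a)"
proof -
  have "L (Q a c y z) (1 - int a) (of_nat a + (\<Sum>k\<in>{2..a}. 0))"
    unfolding Q_def
  proof (rule L_add[OF L_G[OF assms]], rule L_sum)
    fix k assume k: "k \<in> {2..a}"
    have "L (fls_const (c k) * G (a - k) y z) (0 + (1 - int (a - k))) (c k * of_nat (a - k))"
      by (rule L_mult[OF L_const L_G[OF assms]])
    then show "L (fls_const (c k) * G (a - k) y z) (1 - int a) 0"
      by (rule L_lower) (use k in auto)
  qed
  then show ?thesis by simp
qed


lemma unth: fixes a :: nat and \<delta>' \<epsilon> :: "nat \<Rightarrow> cfps"
  shows "(s_next a \<delta>' \<epsilon> - sv) $$ n = - (fps_const (1/of_nat a) * (\<Sum>i=2..a. \<delta>' i * (if n = int (i - 1) then 1 else 0)))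
    + (if n + 1 < 0 then 0 else (if a < nat (n+1) then \<epsilon> (nat(n+1)) else 0))"
  by (simp add: s_next_def tail_sum_def spow1m_def sv_def fls_nth_sum fls_X_inv_times_conv_shift sum_distrib_left)

lemma dvd_cancel_a: fixes f :: cfps assumes "a \<noteq> 0" "fps_X ^ n dvd f * of_nat a" shows "fps_X ^ n dvd f"
proof -
  have "f = (f * of_nat a) * fps_const (1 / of_nat a)"
  proof -
    have "(of_nat a :: cfps) * fps_const (1 / of_nat a) = fps_const (of_nat a * (1 / of_nat a))"
      by (simp add: fps_of_nat[symmetric] fps_const_mult[symmetric] del: fps_const_mult)
    also have "\<dots> = 1" using assms(1) by simp
    finally show ?thesis by (simp add: mult.assoc)
  qed
  then show ?thesis using assms(2) by (metis dvd_mult2)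
qed

lemma core:
  fixes a M :: nat and c \<delta> \<delta>' \<epsilon> :: "nat \<Rightarrow> complex fps"
  assumes ha: "a \<ge> 2"
    and hc: "\<And>i. 2 \<le> i \<Longrightarrow> i \<le> a \<Longrightarrow> fps_X ^ i dvd c i"
    and hM: "\<And>i. 2 \<le> i \<Longrightarrow> i \<le> a \<Longrightarrow> fps_X ^ (i + M) dvd \<delta> i"
    and heq: "monic_expr a (\<lambda>k. c k + \<delta> k) (s_next a \<delta>' \<epsilon>) = monic_expr a c sv"
  shows "\<forall>i>a. fps_X ^ (i + M) dvd \<epsilon> i"
proof -
  define s where "s = sv"
  define y where "y = s_next a \<delta>' \<epsilon>"
  define u where "u = y - s"
  define c' where "c' = (\<lambda>k. c k + \<delta> k)"
  define D where "D = (\<Sum>k=2..a. fls_const (\<delta> k) * s ^ (a - k))"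
  have u0: "u $$ n = 0" if "n \<le> 0" for n
  proof -
    have "(\<Sum>i=2..a. \<delta>' i * (if n = int (i - 1) then 1 else 0)) = 0"
      by (rule sum.neutral) (use that in auto)
    then show ?thesis using that ha unfolding u_def y_def s_def unth by auto
  qed
  have ueps: "u $$ (int i - 1) = \<epsilon> i" if "a < i" for i
  proof -
    have "(\<Sum>j=2..a. \<delta>' j * (if int i - 1 = int (j - 1) then 1 else 0)) = 0"
      by (rule sum.neutral) (use that in auto)
    then show ?thesis using that ha unfolding u_def y_def s_def unth by auto
  qed
  have hc': "fps_X ^ k dvd c' k" if "2 \<le> k" "k \<le> a" for k
  proof -
    have "fps_X ^ k dvd (fps_X ^ (k + M) :: cfps)" by (rule le_imp_power_dvd) simp
    then have "fps_X ^ k dvd \<delta> k" using hM[OF that] dvd_trans by blast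
    then show ?thesis unfolding c'_def using hc[OF that] by simp
  qed
  have hD: "monic_expr a c' y - monic_expr a c' s = - D"
  proof -
    have "monic_expr a c' s = monic_expr a c s + D"
      unfolding monic_expr_def D_def c'_def
      by (simp add: fls_plus_const[symmetric] distrib_right sum.distrib)
    then show ?thesis using heq unfolding c'_def y_def s_def by simp
  qed
  have Ws: "W s 1" unfolding s_def sv_def by (rule W_X_inv)
  have Ls: "L s (-1) 1" unfolding s_def sv_def L_def by simp
  have WD: "W D (int a + int M)"
    unfolding D_def
  proof (rule W_sum)
    fix k assume k: "k \<in> {2..a}"
    have "W (fls_const (\<delta> k)) (int k + int M)" using hM k by (intro W_const) (auto simp: nat_add_distrib)
    from W_mult[OF this W_pow[OF Ws, of "a - k"]] k
    show "W (fls_const (\<delta> k) * s ^ (a - k)) (int a + int M)" by (simp add: of_nat_diff add.commute)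
  qed
  have main: "fps_X ^ (1 + M + k) dvd u $$ int k" for k
  proof (induction k rule: less_induct)
    case (less k)
    show ?case
    proof (cases "k = 0")
      case True then show ?thesis using u0 by simp
    next
      case False
      define u1 where "u1 = (\<Sum>i\<in>{1..<k}. fls_const (u $$ int i) * fls_X ^ i)"
      have u1nth: "u1 $$ j = (if 1 \<le> j \<and> j < int k then u $$ j else 0)" for j
      proof -
        have "u1 $$ j = (\<Sum>i\<in>{1..<k}. if j = int i then u $$ int i else 0)"
          unfolding u1_def fls_nth_sum by (intro sum.cong) auto
        also have "\<dots> = (if 1 \<le> j \<and> j < int k then u $$ j else 0)"
        proof (cases "1 \<le> j \<and> j < int k")
          case True
          define i where "i = nat j"
          have ij: "j = int i" "i \<in> {1..<k}" using True unfolding i_def by auto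
          have "(\<Sum>i'\<in>{1..<k}. if j = int i' then u $$ int i' else 0) = (\<Sum>i'\<in>{1..<k}. if i' = i then u $$ j else 0)"
            by (rule sum.cong) (use ij in auto)
          also have "\<dots> = u $$ j" using ij(2) by simp
          finally show ?thesis using True by simp
        next
          case False
          then show ?thesis by (intro trans[OF sum.neutral]) auto
        qed
        finally show ?thesis .
      qed
      define u2 where "u2 = u - u1"
      define z1 where "z1 = s + u1"
      have yeq: "y = z1 + u2" unfolding z1_def u2_def u_def by simp
      have Wu1: "W u1 (1 + int M)"
        unfolding W_def
      proof
        fix j
        show "fps_X ^ nat (1 + int M + j) dvd u1 $$ j"
        proof (cases "1 \<le> j \<and> j < int k")
          case True
          define i where "i = nat j"
          have i: "j = int i" "i < k" using True unfolding i_def by auto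
          then have "nat (1 + int M + j) = 1 + M + i" by simp
          then show ?thesis using less[OF i(2)] i u1nth by simp
        next
          case False then show ?thesis unfolding u1nth by auto
        qed
      qed
      have Lu2: "L u2 (int k) (u $$ int k)"
        unfolding L_def u2_def using u0 by (auto simp: u1nth)
      have Lz1: "L z1 (-1) 1" using Ls unfolding L_def z1_def by (auto simp: u1nth)
      have Ly: "L y (-1) 1" 
      proof -
        have "y = s + u" unfolding u_def by simp
        then show ?thesis using Ls u0 unfolding L_def by simp
      qed
      have Wz1: "W z1 1" unfolding z1_def by (rule W_add[OF Ws W_mono[OF Wu1]]) simp
      define Q1 where "Q1 = Q a c' z1 s"
      define Q2 where "Q2 = Q a c' y z1"
      have WQ1: "W Q1 (int a - 1)" unfolding Q1_def by (rule W_Q[OF Wz1 Ws hc'])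
      have LQ2: "L Q2 (1 - int a) (of_nat a)" unfolding Q2_def by (rule L_Q[OF Ly Lz1])
      define E where "E = u1 * Q1 + D"
      have WE: "W E (int a + int M)" unfolding E_def
      proof (rule W_add[OF _ WD])
        show "W (u1 * Q1) (int a + int M)" using W_mult[OF Wu1 WQ1] by (simp add: algebra_simps)
      qed
      have d1: "monic_expr a c' z1 - monic_expr a c' s = u1 * Q1"
        unfolding Q1_def monic_diff z1_def by simp
      have d2: "monic_expr a c' y - monic_expr a c' z1 = u2 * Q2"
        unfolding Q2_def monic_diff yeq by simp
      have "u2 * Q2 = - E"
      proof -
        have "u2 * Q2 = (monic_expr a c' y - monic_expr a c' s) - (monic_expr a c' z1 - monic_expr a c' s)"
          using d2 by simp
        also have "\<dots> = - D - u1 * Q1" using hD d1 by simp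
        finally show ?thesis unfolding E_def by simp
      qed
      moreover have "L (u2 * Q2) (int k + (1 - int a)) (u $$ int k * of_nat a)"
        by (rule L_mult[OF Lu2 LQ2])
      ultimately have "E $$ (int k + 1 - int a) = - (u $$ int k * of_nat a)"
        unfolding L_def by (metis add_diff_eq fls_uminus_nth minus_minus)
      moreover have "fps_X ^ nat (int a + int M + (int k + 1 - int a)) dvd E $$ (int k + 1 - int a)"
        using WE unfolding W_def by blast
      moreover have "nat (int a + int M + (int k + 1 - int a)) = 1 + M + k" by simp
      ultimately have X: "fps_X ^ (1 + M + k) dvd u $$ int k * of_nat a" by simp
      show ?thesis by (rule dvd_cancel_a[OF _ X]) (use ha in simp)
    qed
  qed
  show ?thesis
  proof (intro allI impI)
    fix i assume i: "a < i"
    from main[of "i - 1"] ueps[OF i] i show "fps_X ^ (i + M) dvd \<epsilon> i"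
      by (simp add: of_nat_diff add.commute)
  qed
qed
lemma X_dvd_iff: "(f::cfps) \<noteq> 0 \<Longrightarrow> fps_X ^ n dvd f \<longleftrightarrow> n \<le> subdegree f"
  using fps_dvd_iff[of "fps_X ^ n" f] by (simp add: fps_X_power_subdegree)

lemma ord_ge: "fps_X ^ n dvd (f::cfps) \<Longrightarrow> enat n \<le> ord f"
  unfolding ord_def using X_dvd_iff by auto

theorem mainTheorem8:
  fixes a :: nat and c \<delta> \<delta>' \<epsilon> :: "nat \<Rightarrow> complex fps"
  assumes ha: "a \<ge> 2"
    and hc: "\<And>i. 2 \<le> i \<Longrightarrow> i \<le> a \<Longrightarrow> fps_X ^ i dvd c i"
    and hd: "\<And>i. 2 \<le> i \<Longrightarrow> i \<le> a \<Longrightarrow> fps_X ^ (i + 1) dvd \<delta> i"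
    and heq: "monic_expr a (\<lambda>k. c k + \<delta> k) (s_next a \<delta>' \<epsilon>) = monic_expr a c sv"
  shows "\<forall>i > a. ord (\<epsilon> i) \<ge> enat i + Min ((\<lambda>j. ord (\<delta> j) - enat j) ` {2..a})"
proof (intro allI impI)
  fix i assume i: "a < i"
  define S where "S = (\<lambda>j. ord (\<delta> j) - enat j) ` {2..a}"
  have fS: "finite S" "S \<noteq> {}" proof -
    show "finite S" unfolding S_def by simp
    have "2 \<in> {2..a}" using ha by simp
    then show "S \<noteq> {}" unfolding S_def by blast
  qed
  have Mle: "Min S \<le> ord (\<delta> j) - enat j" if "j \<in> {2..a}" for j
    using fS that unfolding S_def by (intro Min_le) auto
  have "enat i + Min S \<le> ord (\<epsilon> i)"
  proof (cases "Min S")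
    case infinity
    have z: "\<delta> j = 0" if "2 \<le> j" "j \<le> a" for j
    proof (rule ccontr)
      assume "\<delta> j \<noteq> 0"
      then have "ord (\<delta> j) - enat j \<noteq> \<infinity>" by (simp add: ord_def)
      then show False using Mle[of j] that infinity by simp
    qed
    have "\<epsilon> i = 0"
    proof (rule ccontr)
      assume ne: "\<epsilon> i \<noteq> 0"
      have "fps_X ^ (i + (subdegree (\<epsilon> i) + 1)) dvd \<epsilon> i"
        using core[OF ha hc _ heq, of "subdegree (\<epsilon> i) + 1"] z i by auto
      then have "i + (subdegree (\<epsilon> i) + 1) \<le> subdegree (\<epsilon> i)" using X_dvd_iff[OF ne] by blast
      then show False by simp
    qed
    then show ?thesis by (simp add: ord_def)
  next
    case (enat m)
    have hM: "fps_X ^ (j + m) dvd \<delta> j" if "2 \<le> j" "j \<le> a" for j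
    proof (cases "\<delta> j = 0")
      case False
      have "j + 1 \<le> subdegree (\<delta> j)" using hd[OF that] X_dvd_iff[OF False] by blast
      moreover have "enat m \<le> enat (subdegree (\<delta> j)) - enat j"
        using Mle[of j] that enat False by (simp add: ord_def)
      ultimately have "j + m \<le> subdegree (\<delta> j)" by simp
      then show ?thesis using X_dvd_iff[OF False] by simp
    qed simp
    have "fps_X ^ (i + m) dvd \<epsilon> i" using core[OF ha hc hM heq] i by auto
    then have "enat (i + m) \<le> ord (\<epsilon> i)" by (rule ord_ge)
    then show ?thesis using enat by simp
  qed
  then show "enat i + Min ((\<lambda>j. ord (\<delta> j) - enat j) ` {2..a}) \<le> ord (\<epsilon> i)" unfolding S_def .
qed

end
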